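(* Let $\mu$ be an infinite cardinal and $F$ a uniform filter on $\mu$. If $\kappa$ is a strongly inaccessible cardinal such that every $\kappa$-Aronszajn tree admits an $F$-ascent path, then $\mathrm{Pr}_1(\kappa,\kappa,2,(2,\mu^+))$ fails.
   Context: A filter $F$ on $\mu$ is uniform if every member of $F$ has size $\mu$. For a tree $(T,<_T)$ of height $\kappa$ with levels $T_\alpha$, an $F$-ascent path is a sequence $\langle f_\alpha\mid\alpha<\kappa\rangle$ with $f_\alpha:\mu\to T_\alpha$ such that for all $\alpha<\beta<\kappa$, $\{i<\mu\mid f_\alpha(i)<_T f_\beta(i)\}\in F$. For sets of ordinals, $\alpha<b$ means $\alpha<\beta$ for all $\beta\in b$. $\mathrm{Pr}_1(\kappa,\kappa,\theta,(2,\chi))$ asserts the existence of $c:[\kappa]^2\to\theta$ such that for every $A\in[\kappa]^\kappa$, every $\sigma<\chi$, every pairwise disjoint family $\mathcal B\subseteq[\kappa]^\sigma$ of size $\kappa$, and every $\tau<\theta$, there are $\alpha\in A$ and $b\in\mathcal B$ with $\alpha<b$ and $c[\{\alpha\}\times b]=\{\tau\}$. *)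

theory Defs
  imports Main "HOL-Library.Equipollence" "HOL-Library.Countable_Set"
begin

text \<open>The cardinal kappa is represented as the order type of a wellorder type 'k
  that is an initial ordinal (every proper initial segment has smaller cardinality).\<close>

definition initial_type :: "'k::wellorder itself \<Rightarrow> bool" where
  "initial_type _ \<longleftrightarrow> (\<forall>\<alpha>::'k. {\<beta>. \<beta> < \<alpha>} \<prec> (UNIV::'k set))"

definition strongly_inaccessible :: "'k::wellorder itself \<Rightarrow> bool" where
  "strongly_inaccessible K \<longleftrightarrow>
     initial_type K \<and>
     uncountable (UNIV::'k set) \<and>
     \<comment> \<open>regular: every subset of size less than kappa is bounded\<close>
     (\<forall>X::'k set. X \<prec> (UNIV::'k set) \<longrightarrow> (\<exists>\<alpha>. \<forall>x\<in>X. x < \<alpha>)) \<and>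
     \<comment> \<open>strong limit: 2^lambda < kappa for lambda < kappa\<close>
     (\<forall>X::'k set. X \<prec> (UNIV::'k set) \<longrightarrow> Pow X \<prec> (UNIV::'k set))"

text \<open>A tree (T, lt) with height function ht: for each node x, ht is an order isomorphism
  from the predecessors of x onto the ordinal ht x (so ht x is the height of x).\<close>

definition is_tree :: "'n set \<Rightarrow> ('n \<Rightarrow> 'n \<Rightarrow> bool) \<Rightarrow> ('n \<Rightarrow> 'k::wellorder) \<Rightarrow> bool" where
  "is_tree T lt ht \<longleftrightarrow>
     (\<forall>x\<in>T. \<not> lt x x) \<and>
     (\<forall>x\<in>T. \<forall>y\<in>T. \<forall>z\<in>T. lt x y \<and> lt y z \<longrightarrow> lt x z) \<and>
     (\<forall>x\<in>T. bij_betw ht {y\<in>T. lt y x} {\<beta>. \<beta> < ht x} \<and>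
        (\<forall>y\<in>T. \<forall>z\<in>T. lt y x \<and> lt z x \<longrightarrow> (lt y z \<longleftrightarrow> ht y < ht z)))"

definition tree_level :: "'n set \<Rightarrow> ('n \<Rightarrow> 'k::wellorder) \<Rightarrow> 'k \<Rightarrow> 'n set" where
  "tree_level T ht \<alpha> = {x\<in>T. ht x = \<alpha>}"

definition kappa_tree :: "'n set \<Rightarrow> ('n \<Rightarrow> 'n \<Rightarrow> bool) \<Rightarrow> ('n \<Rightarrow> 'k::wellorder) \<Rightarrow> bool" where
  "kappa_tree T lt ht \<longleftrightarrow> is_tree T lt ht \<and>
     (\<forall>\<alpha>. tree_level T ht \<alpha> \<noteq> {}) \<and>
     (\<forall>\<alpha>. tree_level T ht \<alpha> \<prec> (UNIV::'k set))"

definition cofinal_branch :: "'n set \<Rightarrow> ('n \<Rightarrow> 'n \<Rightarrow> bool) \<Rightarrow> ('n \<Rightarrow> 'k::wellorder) \<Rightarrow> 'n set \<Rightarrow> bool" where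
  "cofinal_branch T lt ht B \<longleftrightarrow> B \<subseteq> T \<and>
     (\<forall>x\<in>B. \<forall>y\<in>B. x = y \<or> lt x y \<or> lt y x) \<and>
     (\<forall>x\<in>B. \<forall>y\<in>T. lt y x \<longrightarrow> y \<in> B) \<and>
     (\<forall>\<alpha>. B \<inter> tree_level T ht \<alpha> \<noteq> {})"

definition aronszajn_tree :: "'n set \<Rightarrow> ('n \<Rightarrow> 'n \<Rightarrow> bool) \<Rightarrow> ('n \<Rightarrow> 'k::wellorder) \<Rightarrow> bool" where
  "aronszajn_tree T lt ht \<longleftrightarrow> kappa_tree T lt ht \<and> \<not> (\<exists>B. cofinal_branch T lt ht B)"

text \<open>Filters on mu = UNIV::'m set are Isabelle filters; X \<in> F iff eventually (\<lambda>i. i \<in> X) F.\<close>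

definition uniform_filter :: "'m filter \<Rightarrow> bool" where
  "uniform_filter F \<longleftrightarrow> (\<forall>X. eventually (\<lambda>i. i \<in> X) F \<longrightarrow> X \<approx> (UNIV::'m set))"

definition ascent_path :: "'m filter \<Rightarrow> 'n set \<Rightarrow> ('n \<Rightarrow> 'n \<Rightarrow> bool) \<Rightarrow> ('n \<Rightarrow> 'k::wellorder)
    \<Rightarrow> ('k \<Rightarrow> 'm \<Rightarrow> 'n) \<Rightarrow> bool" where
  "ascent_path F T lt ht f \<longleftrightarrow>
     (\<forall>\<alpha> i. f \<alpha> i \<in> tree_level T ht \<alpha>) \<and>
     (\<forall>\<alpha> \<beta>. \<alpha> < \<beta> \<longrightarrow> eventually (\<lambda>i. lt (f \<alpha> i) (f \<beta> i)) F)"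

text \<open>Pr_1(kappa, kappa, theta, (2, chi)) with chi = |M|^+: sigma < chi ranges over the
  cardinalities |S| of subsets S of M. Colourings c of [kappa]^2 are given as c alpha beta
  for alpha < beta.\<close>

definition Pr1_succ :: "'k::wellorder itself \<Rightarrow> nat \<Rightarrow> 'm set \<Rightarrow> bool" where
  "Pr1_succ _ \<theta> M \<longleftrightarrow>
     (\<exists>c::'k \<Rightarrow> 'k \<Rightarrow> nat. (\<forall>\<alpha> \<beta>. \<alpha> < \<beta> \<longrightarrow> c \<alpha> \<beta> < \<theta>) \<and>
       (\<forall>(A::'k set) (B::'k set set) \<tau>.
          A \<approx> (UNIV::'k set) \<and> B \<approx> (UNIV::'k set) \<and> pairwise disjnt B \<and>
          (\<exists>S\<subseteq>M. \<forall>b\<in>B. b \<approx> S) \<and> \<tau> < \<theta> \<longrightarrow>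
          (\<exists>\<alpha>\<in>A. \<exists>b\<in>B. \<forall>\<beta>\<in>b. \<alpha> < \<beta> \<and> c \<alpha> \<beta> = \<tau>)))"

end

theory Submission
  imports Defs
begin

lemma lepoll_card_of: "A \<lesssim> B \<longleftrightarrow> ordLeq2 (card_of A) (card_of B)"
  by (simp add: lepoll_def card_of_ordLeq[symmetric])

lemma lepoll_total: "A \<lesssim> B \<or> B \<lesssim> A"
  unfolding lepoll_card_of by (rule ordLeq_total[OF card_of_Well_order card_of_Well_order])

lemma times_inf: "infinite A \<Longrightarrow> A \<times> A \<approx> A"
  by (simp add: eqpoll_iff_card_of_ordIso card_of_Times_same_infinite)

lemma Un_lepoll_inf: "infinite S \<Longrightarrow> A \<lesssim> S \<Longrightarrow> C \<lesssim> S \<Longrightarrow> A \<union> C \<lesssim> S"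
  unfolding lepoll_card_of
  by (rule card_of_Un_ordLeq_infinite_Field) (auto simp: Field_card_of card_of_Card_order card_of_card_order_on)

lemma SI_bound:
  assumes "strongly_inaccessible TYPE('k::wellorder)" "(X::'k set) \<prec> (UNIV::'k set)"
  shows "\<exists>\<alpha>. \<forall>x\<in>X. x < \<alpha>"
proof -
  have "\<forall>X::'k set. X \<prec> (UNIV::'k set) \<longrightarrow> (\<exists>\<alpha>. \<forall>x\<in>X. x < \<alpha>)"
    using assms(1) unfolding strongly_inaccessible_def by (elim conjE)
  thus ?thesis using assms(2) by simp
qed

lemma SI_init:
  assumes "strongly_inaccessible TYPE('k::wellorder)"
  shows "{\<beta>. \<beta> < (\<alpha>::'k)} \<prec> (UNIV::'k set)"
proof -
  have "initial_type TYPE('k)" using assms unfolding strongly_inaccessible_def by (elim conjE)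
  thus ?thesis unfolding initial_type_def by simp
qed

lemma SI_pow:
  assumes "strongly_inaccessible TYPE('k::wellorder)" "(X::'k set) \<prec> (UNIV::'k set)"
  shows "Pow X \<prec> (UNIV::'k set)"
proof -
  have "\<forall>X::'k set. X \<prec> (UNIV::'k set) \<longrightarrow> Pow X \<prec> (UNIV::'k set)"
    using assms(1) unfolding strongly_inaccessible_def by (elim conjE)
  thus ?thesis using assms(2) by simp
qed

lemma SI_infinite:
  assumes "strongly_inaccessible TYPE('k::wellorder)"
  shows "infinite (UNIV::'k set)"
proof
  assume "finite (UNIV::'k set)"
  hence "countable (UNIV::'k set)" by (rule countable_finite)
  thus False using assms unfolding strongly_inaccessible_def by simp
qed

lemma SI_nomax:
  assumes "strongly_inaccessible TYPE('k::wellorder)"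
  shows "\<exists>d. (a::'k) < d"
proof (rule ccontr)
  assume "\<not> ?thesis"
  hence "\<forall>x. \<not> a < x" by blast
  hence U: "UNIV = insert a {\<beta>. \<beta> < a}" by (auto simp: not_less_iff_gr_or_eq)
  have "infinite {\<beta>. \<beta> < a}"
  proof
    assume "finite {\<beta>. \<beta> < a}"
    hence "finite (UNIV::'k set)" by (subst U) simp
    thus False using SI_infinite[OF assms] by simp
  qed
  hence "insert a {\<beta>. \<beta> < a} \<approx> {\<beta>. \<beta> < a}" by (rule infinite_insert_eqpoll)
  hence "(UNIV::'k set) \<approx> {\<beta>. \<beta> < a}" using U by simp
  hence "{\<beta>. \<beta> < a} \<approx> (UNIV::'k set)" by (rule eqpoll_sym)
  thus False using SI_init[OF assms, of a] unfolding lesspoll_def by simp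
qed

lemma SI_le_small:
  assumes "strongly_inaccessible TYPE('k::wellorder)"
  shows "{\<beta>. \<beta> \<le> (a::'k)} \<prec> (UNIV::'k set)"
proof -
  obtain d where "a < d" using SI_nomax[OF assms] by blast
  hence "{\<beta>. \<beta> \<le> a} \<subseteq> {\<beta>. \<beta> < d}" by auto
  hence "{\<beta>. \<beta> \<le> a} \<lesssim> {\<beta>. \<beta> < d}" by (rule subset_imp_lepoll)
  thus ?thesis using SI_init[OF assms, of d] by (rule lesspoll_trans1)
qed

lemma SI_unbounded:
  assumes "strongly_inaccessible TYPE('k::wellorder)" "\<not> (\<exists>\<alpha>. \<forall>x\<in>X. x < \<alpha>)"
  shows "(X::'k set) \<approx> (UNIV::'k set)"
proof -
  have "\<not> X \<prec> (UNIV::'k set)" using assms SI_bound[OF assms(1), of X] by blast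
  moreover have "X \<lesssim> (UNIV::'k set)" by (rule subset_imp_lepoll) simp
  ultimately show ?thesis unfolding lesspoll_def by blast
qed

lemma SI_small_image:
  assumes "strongly_inaccessible TYPE('k::wellorder)"
  shows "f ` {\<beta>. \<beta> < (a::'k)} \<prec> (UNIV::'k set)"
  using image_lepoll SI_init[OF assms] by (rule lesspoll_trans1)

lemma coreL:
  fixes c :: "'k::wellorder \<Rightarrow> 'k \<Rightarrow> nat" and F :: "'m filter"
    and \<beta> :: "'k \<Rightarrow> 'm \<Rightarrow> 'k" and v :: "'k \<Rightarrow> 'm \<Rightarrow> nat"
  assumes SI: "strongly_inaccessible TYPE('k)"
    and minf: "infinite (UNIV::'m set)"
    and Fnb: "F \<noteq> bot"
    and bge: "\<And>d i. d \<le> \<beta> d i"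
    and coh: "\<And>a d. a < d \<Longrightarrow> eventually (\<lambda>i. c a (\<beta> d i) = v a i) F"
  shows "\<exists>A B \<tau>. A \<approx> (UNIV::'k set) \<and> B \<approx> (UNIV::'k set) \<and> pairwise disjnt B \<and>
     (\<exists>S\<subseteq>(UNIV::'m set). \<forall>b\<in>B. b \<approx> S) \<and> \<tau> < (2::nat) \<and>
     \<not>(\<exists>\<alpha>\<in>A. \<exists>b\<in>B. \<forall>x\<in>b. \<alpha> < x \<and> c \<alpha> x = \<tau>)"
proof -
  define tf where "tf a = (if eventually (\<lambda>i. v a i = 0) F then 1 else 0::nat)" for a
  have tf: "\<not> eventually (\<lambda>i. v a i = tf a) F" for a
  proof
    assume H: "eventually (\<lambda>i. v a i = tf a) F"
    show False
    proof (cases "eventually (\<lambda>i. v a i = 0) F")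
      case True
      hence "eventually (\<lambda>i. v a i = 1) F" using H by (simp add: tf_def)
      with True have "eventually (\<lambda>i. False) F"
        by (rule eventually_elim2) simp
      thus False using Fnb by simp
    next
      case False
      thus False using H by (simp add: tf_def)
    qed
  qed
  have tf2: "tf a < 2" for a by (simp add: tf_def)
  have "\<exists>\<tau><2. \<not> (\<exists>\<gamma>. \<forall>x\<in>{a. tf a = \<tau>}. x < \<gamma>)"
  proof (rule ccontr)
    assume N: "\<not> ?thesis"
    have N2: "\<forall>\<tau><2. \<exists>\<gamma>. \<forall>x\<in>{a. tf a = \<tau>}. x < \<gamma>" using N by blast
    obtain g0 where g0: "\<forall>x\<in>{a. tf a = 0}. x < g0" using N2[rule_format, of 0] by force
    obtain g1 where g1: "\<forall>x\<in>{a. tf a = 1}. x < g1" using N2[rule_format, of 1] by force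
    define m where "m = max g0 g1"
    have "tf m = 0 \<or> tf m = 1" using tf2[of m] by linarith
    moreover have "\<not> m < g0" "\<not> m < g1" unfolding m_def by auto
    ultimately show False using g0 g1 by auto
  qed
  then obtain \<tau> where \<tau>2: "\<tau> < (2::nat)" and unb: "\<not> (\<exists>\<gamma>. \<forall>x\<in>{a. tf a = \<tau>}. x < \<gamma>)" by blast
  define A where "A = {a. tf a = \<tau>}"
  have Aeq: "A \<approx> (UNIV::'k set)" unfolding A_def by (rule SI_unbounded[OF SI unb])
  have wit: "\<exists>i. c a (\<beta> d i) \<noteq> \<tau>" if "a \<in> A" "a < d" for a d
  proof (rule ccontr)
    assume "\<not> ?thesis"
    hence "eventually (\<lambda>i. c a (\<beta> d i) = \<tau>) F" by simp
    hence "eventually (\<lambda>i. v a i = tf a) F" using coh[OF that(2)]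
      by (rule eventually_elim2) (use that(1) in \<open>simp add: A_def\<close>)
    thus False using tf by blast
  qed
  define w where "w a d = (SOME i. c a (\<beta> d i) \<noteq> \<tau>)" for a d
  have w: "c a (\<beta> d (w a d)) \<noteq> \<tau>" if "a \<in> A" "a < d" for a d
    unfolding w_def using wit[OF that] by (rule someI_ex)
  define W where "W d = (\<lambda>a. if a = d then d else \<beta> d (w a d)) ` {a. a \<le> d}" for d
  have dW: "d \<in> W d" for d unfolding W_def by force
  have Wge: "x \<in> W d \<Longrightarrow> d \<le> x" for x d unfolding W_def using bge by auto
  have Wsmall: "W d \<prec> (UNIV::'k set)" for d
    unfolding W_def using image_lepoll SI_le_small[OF SI] by (rule lesspoll_trans1)
  have Wm: "W d \<lesssim> (UNIV::'m set)" for d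
  proof -
    have "W d \<subseteq> {d} \<union> range (\<beta> d)" unfolding W_def by auto
    moreover have "{d} \<union> range (\<beta> d) \<lesssim> (UNIV::'m set)"
    proof (rule Un_lepoll_inf[OF minf])
      show "{d} \<lesssim> (UNIV::'m set)" unfolding lepoll_def
        by (rule exI[of _ "\<lambda>_. undefined"]) auto
      show "range (\<beta> d) \<lesssim> (UNIV::'m set)" by (rule image_lepoll)
    qed
    ultimately show ?thesis using subset_imp_lepoll lepoll_trans by blast
  qed
  have Wwit: "\<exists>x\<in>W d. c a x \<noteq> \<tau>" if "a \<in> A" "a < d" for a d
  proof
    show "\<beta> d (w a d) \<in> W d" unfolding W_def using that(2)
      by (intro image_eqI[of _ _ a]) auto
  qed (rule w[OF that])
  define g where "g x = (SOME \<gamma>. \<forall>y\<in>W x. y < \<gamma>)" for x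
  have g: "y \<in> W x \<Longrightarrow> y < g x" for x y
    unfolding g_def using someI_ex[OF SI_bound[OF SI Wsmall[of x]]] by blast
  have xg: "x < g x" for x using g[OF dW] .
  define H where "H = (\<lambda>(\<phi>::'k\<Rightarrow>'k) (\<xi>::'k). SOME \<delta>. \<forall>\<eta><\<xi>. g (\<phi> \<eta>) < (\<delta>::'k))"
  define h where "h = wfrec {(x::'k, y). x < y} H"
  have heq: "h \<xi> = (SOME \<delta>. \<forall>\<eta><\<xi>. g (h \<eta>) < \<delta>)" for \<xi>
  proof -
    have "h \<xi> = H (cut h {(x::'k, y). x < y} \<xi>) \<xi>" unfolding h_def by (rule wfrec[OF wf])
    also have "\<dots> = (SOME \<delta>. \<forall>\<eta><\<xi>. g (h \<eta>) < \<delta>)" unfolding H_def cut_def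
      by (rule arg_cong[where f=Eps]) (auto intro!: ext)
    finally show ?thesis .
  qed
  have hprop: "\<eta> < \<xi> \<Longrightarrow> g (h \<eta>) < h \<xi>" for \<eta> \<xi>
  proof -
    assume "\<eta> < \<xi>"
    have "\<exists>\<delta>. \<forall>y\<in>(\<lambda>\<eta>. g (h \<eta>)) ` {\<eta>. \<eta> < \<xi>}. y < \<delta>"
      by (rule SI_bound[OF SI SI_small_image[OF SI]])
    hence "\<exists>\<delta>. \<forall>\<eta><\<xi>. g (h \<eta>) < \<delta>" by auto
    from someI_ex[OF this] show ?thesis using \<open>\<eta> < \<xi>\<close> heq[of \<xi>] by auto
  qed
  have hmono: "\<eta> < \<xi> \<Longrightarrow> h \<eta> < h \<xi>" for \<eta> \<xi>
    using hprop xg less_trans by blast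
  have ghmono: "\<eta> < \<xi> \<Longrightarrow> g (h \<eta>) < g (h \<xi>)" for \<eta> \<xi>
    using hprop xg less_trans by blast
  have ghinj: "inj (\<lambda>\<xi>. g (h \<xi>))"
    by (rule injI) (metis ghmono less_irrefl neq_iff)
  define Z where "Z = range (\<lambda>\<xi>. g (h \<xi>))"
  have Zeq: "Z \<approx> (UNIV::'k set)" unfolding Z_def by (rule inj_on_image_eqpoll_self[OF ghinj])
  have ZW: "z \<in> Z \<Longrightarrow> z \<notin> W (h \<xi>)" for z \<xi>
  proof
    assume "z \<in> Z" "z \<in> W (h \<xi>)"
    then obtain \<eta> where z: "z = g (h \<eta>)" unfolding Z_def by blast
    have 1: "h \<xi> \<le> z" "z < g (h \<xi>)" using Wge g \<open>z \<in> W (h \<xi>)\<close> by auto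
    show False
    proof (cases \<eta> \<xi> rule: linorder_cases)
      case less thus False using hprop[OF less] 1 z by simp
    next
      case equal thus False using 1 z by simp
    next
      case greater
      have "g (h \<xi>) < g (h \<eta>)" using hprop[OF greater] xg[of "h \<eta>"] by (rule less_trans)
      thus False using 1 z by simp
    qed
  qed
  have Wdisj: "\<eta> < \<xi> \<Longrightarrow> W (h \<eta>) \<inter> W (h \<xi>) = {}" for \<eta> \<xi>
  proof -
    assume "\<eta> < \<xi>"
    { fix x assume "x \<in> W (h \<eta>)" "x \<in> W (h \<xi>)"
      hence "x < g (h \<eta>)" "h \<xi> \<le> x" using g Wge by auto
      hence False using hprop[OF \<open>\<eta> < \<xi>\<close>] by simp }
    thus ?thesis by blast
  qed
  have "(UNIV::('k \<times> 'k) set) \<approx> Z"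
  proof -
    have "(UNIV::('k \<times> 'k) set) = UNIV \<times> UNIV" by simp
    also have "\<dots> \<approx> (UNIV::'k set)" by (rule times_inf[OF SI_infinite[OF SI]])
    also have "\<dots> \<approx> Z" by (rule eqpoll_sym[OF Zeq])
    finally show ?thesis .
  qed
  then obtain q where q: "bij_betw q (UNIV::('k \<times> 'k) set) Z" unfolding eqpoll_def by blast
  define Q where "Q \<xi> = q ` ({\<xi>} \<times> UNIV)" for \<xi>
  have QZ: "Q \<xi> \<subseteq> Z" for \<xi> unfolding Q_def using q by (auto simp: bij_betw_def)
  have qinj: "inj q" using q by (simp add: bij_betw_def)
  have Qdisj: "\<xi> \<noteq> \<eta> \<Longrightarrow> Q \<xi> \<inter> Q \<eta> = {}" for \<xi> \<eta>
  proof -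
    assume ne: "\<xi> \<noteq> \<eta>"
    { fix x assume "x \<in> Q \<xi>" "x \<in> Q \<eta>"
      then obtain a a' where "x = q (\<xi>, a)" "x = q (\<eta>, a')" unfolding Q_def by blast
      hence "(\<xi>, a) = (\<eta>, a')" using injD[OF qinj] by metis
      hence False using ne by simp }
    thus ?thesis by blast
  qed
  have Qeq: "Q \<xi> \<approx> (UNIV::'k set)" for \<xi>
  proof -
    have "inj_on q ({\<xi>} \<times> UNIV)" using qinj by (rule inj_on_subset) simp
    hence "Q \<xi> \<approx> {\<xi>} \<times> (UNIV::'k set)" unfolding Q_def by (rule inj_on_image_eqpoll_self)
    also have "\<dots> \<approx> (UNIV::'k set)" by (rule times_singleton_eqpoll)
    finally show ?thesis .
  qed
  obtain S :: "'m set" where Sinf: "infinite S" and Sk: "S \<lesssim> (UNIV::'k set)"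
    and WS: "\<And>d. W d \<lesssim> S"
  proof (cases "(UNIV::'m set) \<prec> (UNIV::'k set)")
    case True
    show ?thesis by (rule that[of UNIV]) (use minf True lesspoll_imp_lepoll Wm in auto)
  next
    case False
    have "(UNIV::'k set) \<lesssim> (UNIV::'m set)"
      using False lepoll_total[of "UNIV::'k set" "UNIV::'m set"]
      unfolding lesspoll_def using eqpoll_imp_lepoll eqpoll_sym by blast
    then obtain f :: "'k \<Rightarrow> 'm" where f: "inj f" unfolding lepoll_def by blast
    have Rf: "range f \<approx> (UNIV::'k set)" by (rule inj_on_image_eqpoll_self[OF f])
    show ?thesis
    proof (rule that[of "range f"])
      show "infinite (range f)" using Rf SI_infinite[OF SI] eqpoll_finite_iff by blast
      show "range f \<lesssim> (UNIV::'k set)" using Rf eqpoll_imp_lepoll by blast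
      show "W d \<lesssim> range f" for d
        using Wsmall[of d] Rf eqpoll_sym unfolding lesspoll_def
        by (meson eqpoll_imp_lepoll lepoll_trans)
    qed
  qed
  define P where "P \<xi> = (SOME P. P \<subseteq> Q \<xi> \<and> P \<approx> S)" for \<xi>
  have P: "P \<xi> \<subseteq> Q \<xi> \<and> P \<xi> \<approx> S" for \<xi>
  proof -
    have "S \<lesssim> Q \<xi>" using Sk Qeq[of \<xi>] eqpoll_sym eqpoll_imp_lepoll lepoll_trans by blast
    then obtain f where "inj_on f S" "f ` S \<subseteq> Q \<xi>" unfolding lepoll_def by blast
    hence "\<exists>P. P \<subseteq> Q \<xi> \<and> P \<approx> S" using inj_on_image_eqpoll_self by blast
    thus ?thesis unfolding P_def by (rule someI_ex)
  qed
  define b where "b \<xi> = W (h \<xi>) \<union> P \<xi>" for \<xi>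
  have PS: "P \<xi> \<lesssim> S" for \<xi> using P[of \<xi>] by (simp add: eqpoll_imp_lepoll)
  have SP: "S \<lesssim> P \<xi>" for \<xi> using P[of \<xi>] by (simp add: eqpoll_imp_lepoll eqpoll_sym)
  have beq: "b \<xi> \<approx> S" for \<xi>
  proof (rule lepoll_antisym)
    show "b \<xi> \<lesssim> S" unfolding b_def by (rule Un_lepoll_inf[OF Sinf WS PS])
    have "P \<xi> \<lesssim> b \<xi>" unfolding b_def by (rule subset_imp_lepoll) simp
    with SP show "S \<lesssim> b \<xi>" by (rule lepoll_trans)
  qed
  have bdisj: "\<xi> \<noteq> \<eta> \<Longrightarrow> b \<xi> \<inter> b \<eta> = {}" for \<xi> \<eta>
  proof -
    assume ne: "\<xi> \<noteq> \<eta>"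
    have 1: "W (h \<xi>) \<inter> W (h \<eta>) = {}"
    proof (cases "\<xi> < \<eta>")
      case True thus ?thesis by (rule Wdisj)
    next
      case False hence "\<eta> < \<xi>" using ne by simp
      from Wdisj[OF this] show ?thesis by blast
    qed
    have PQ: "P z \<subseteq> Q z" for z using P[of z] by simp
    have 2: "P \<xi> \<inter> P \<eta> = {}" using Qdisj[OF ne] PQ[of \<xi>] PQ[of \<eta>] by blast
    have PZ: "P z \<subseteq> Z" for z using PQ[of z] QZ[of z] by (rule subset_trans)
    have 3: "W (h z) \<inter> P z' = {}" for z z' using PZ[of z'] ZW[of _ z] by blast
    show ?thesis unfolding b_def using 1 2 3[of \<xi> \<eta>] 3[of \<eta> \<xi>] by blast
  qed
  have binj: "inj b"
  proof (rule injI)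
    fix \<xi> \<eta> assume "b \<xi> = b \<eta>"
    moreover have "h \<xi> \<in> b \<xi>" unfolding b_def using dW by blast
    ultimately have "h \<xi> \<in> b \<xi> \<inter> b \<eta>" by simp
    thus "\<xi> = \<eta>" using bdisj by (cases "\<xi> = \<eta>") auto
  qed
  define B where "B = range b"
  have Beq: "B \<approx> (UNIV::'k set)" unfolding B_def by (rule inj_on_image_eqpoll_self[OF binj])
  have Bdisj: "pairwise disjnt B"
  proof (rule pairwiseI)
    fix s t assume "s \<in> B" "t \<in> B" "s \<noteq> t"
    then obtain \<xi> \<eta> where st: "s = b \<xi>" "t = b \<eta>" unfolding B_def by blast
    hence "\<xi> \<noteq> \<eta>" using \<open>s \<noteq> t\<close> by blast
    thus "disjnt s t" using bdisj st by (simp add: disjnt_def)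
  qed
  have final: "\<not>(\<exists>\<alpha>\<in>A. \<exists>b\<in>B. \<forall>x\<in>b. \<alpha> < x \<and> c \<alpha> x = \<tau>)"
  proof
    assume "\<exists>\<alpha>\<in>A. \<exists>b\<in>B. \<forall>x\<in>b. \<alpha> < x \<and> c \<alpha> x = \<tau>"
    then obtain \<alpha> bb where \<alpha>: "\<alpha> \<in> A" and bb: "bb \<in> B" and all0: "\<forall>x\<in>bb. \<alpha> < x \<and> c \<alpha> x = \<tau>"
      by blast
    from bb obtain \<xi> where "bb = b \<xi>" unfolding B_def by blast
    with all0 have all: "\<forall>x\<in>b \<xi>. \<alpha> < x \<and> c \<alpha> x = \<tau>" by simp
    have "h \<xi> \<in> b \<xi>" unfolding b_def using dW by blast
    hence lt: "\<alpha> < h \<xi>" using all by simp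
    obtain x where "x \<in> W (h \<xi>)" "c \<alpha> x \<noteq> \<tau>" using Wwit[OF \<alpha> lt] by blast
    moreover have "x \<in> b \<xi>" using \<open>x \<in> W (h \<xi>)\<close> unfolding b_def by simp
    ultimately show False using all by simp
  qed
  have SB: "\<exists>S\<subseteq>(UNIV::'m set). \<forall>x\<in>B. x \<approx> S"
  proof (intro exI[of _ S] conjI ballI)
    fix x assume "x \<in> B"
    then obtain \<xi> where "x = b \<xi>" unfolding B_def by blast
    thus "x \<approx> S" using beq by simp
  qed simp
  show ?thesis
    apply (rule exI[of _ A], rule exI[of _ B], rule exI[of _ \<tau>])
    using Aeq Beq Bdisj SB \<tau>2 final by (intro conjI) (assumption+)
qed

lemma transfer_tree:
  fixes e :: "'a \<Rightarrow> 'b" and ht0 :: "'a \<Rightarrow> 'k::wellorder"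
  assumes inj: "inj_on e T0" and tree: "is_tree T0 lt0 ht0"
  shows "is_tree (e ` T0) (\<lambda>x y. lt0 (inv_into T0 e x) (inv_into T0 e y)) (\<lambda>x. ht0 (inv_into T0 e x))"
    and "tree_level (e ` T0) (\<lambda>x. ht0 (inv_into T0 e x)) \<alpha> = e ` tree_level T0 ht0 \<alpha>"
proof -
  define d where "d = inv_into T0 e"
  have de: "y \<in> T0 \<Longrightarrow> d (e y) = y" for y unfolding d_def using inj by (rule inv_into_f_f)
  show "tree_level (e ` T0) (\<lambda>x. ht0 (inv_into T0 e x)) \<alpha> = e ` tree_level T0 ht0 \<alpha>"
    unfolding tree_level_def d_def[symmetric]
  proof (rule set_eqI, rule iffI)
    fix x assume "x \<in> {x \<in> e ` T0. ht0 (d x) = \<alpha>}"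
    then obtain y where "y \<in> T0" "x = e y" "ht0 (d x) = \<alpha>" by blast
    thus "x \<in> e ` {x \<in> T0. ht0 x = \<alpha>}" using de[of y] by simp
  next
    fix x assume "x \<in> e ` {x \<in> T0. ht0 x = \<alpha>}"
    then obtain y where "y \<in> T0" "x = e y" "ht0 y = \<alpha>" by blast
    thus "x \<in> {x \<in> e ` T0. ht0 (d x) = \<alpha>}" using de[of y] by simp
  qed
  have T1: "\<forall>x\<in>T0. \<not> lt0 x x" and T2: "\<forall>x\<in>T0. \<forall>y\<in>T0. \<forall>z\<in>T0. lt0 x y \<and> lt0 y z \<longrightarrow> lt0 x z"
    and T3: "\<forall>x\<in>T0. bij_betw ht0 {y\<in>T0. lt0 y x} {\<beta>. \<beta> < ht0 x}"
    and T4: "\<forall>x\<in>T0. \<forall>y\<in>T0. \<forall>z\<in>T0. lt0 y x \<and> lt0 z x \<longrightarrow> (lt0 y z \<longleftrightarrow> ht0 y < ht0 z)"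
  proof -
    have TT: "(\<forall>x\<in>T0. \<not> lt0 x x) \<and> (\<forall>x\<in>T0. \<forall>y\<in>T0. \<forall>z\<in>T0. lt0 x y \<and> lt0 y z \<longrightarrow> lt0 x z) \<and>
     (\<forall>x\<in>T0. bij_betw ht0 {y\<in>T0. lt0 y x} {\<beta>. \<beta> < ht0 x} \<and>
        (\<forall>y\<in>T0. \<forall>z\<in>T0. lt0 y x \<and> lt0 z x \<longrightarrow> (lt0 y z \<longleftrightarrow> ht0 y < ht0 z)))"
      using tree unfolding is_tree_def .
    show "\<forall>x\<in>T0. \<not> lt0 x x" using TT by (rule conjunct1)
    show "\<forall>x\<in>T0. \<forall>y\<in>T0. \<forall>z\<in>T0. lt0 x y \<and> lt0 y z \<longrightarrow> lt0 x z" using TT[THEN conjunct2] by (rule conjunct1)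
    show "\<forall>x\<in>T0. bij_betw ht0 {y\<in>T0. lt0 y x} {\<beta>. \<beta> < ht0 x}"
    proof
      fix x assume "x \<in> T0"
      from bspec[OF TT[THEN conjunct2, THEN conjunct2] this]
      show "bij_betw ht0 {y\<in>T0. lt0 y x} {\<beta>. \<beta> < ht0 x}" by (rule conjunct1)
    qed
    show "\<forall>x\<in>T0. \<forall>y\<in>T0. \<forall>z\<in>T0. lt0 y x \<and> lt0 z x \<longrightarrow> (lt0 y z \<longleftrightarrow> ht0 y < ht0 z)"
    proof
      fix x assume "x \<in> T0"
      from bspec[OF TT[THEN conjunct2, THEN conjunct2] this]
      show "\<forall>y\<in>T0. \<forall>z\<in>T0. lt0 y x \<and> lt0 z x \<longrightarrow> (lt0 y z \<longleftrightarrow> ht0 y < ht0 z)" by (rule conjunct2)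
    qed
  qed
  have dT: "x \<in> e ` T0 \<Longrightarrow> d x \<in> T0" for x unfolding d_def by (rule inv_into_into)
  have pred: "{y\<in>e ` T0. lt0 (d y) (d (e x))} = e ` {y\<in>T0. lt0 y x}" if "x \<in> T0" for x
  proof (rule set_eqI, rule iffI)
    fix z assume "z \<in> {y\<in>e ` T0. lt0 (d y) (d (e x))}"
    then obtain y where "y \<in> T0" "z = e y" "lt0 (d z) (d (e x))" by blast
    thus "z \<in> e ` {y\<in>T0. lt0 y x}" using de[of y] de[OF that] by simp
  next
    fix z assume "z \<in> e ` {y\<in>T0. lt0 y x}"
    then obtain y where "y \<in> T0" "z = e y" "lt0 y x" by blast
    thus "z \<in> {y\<in>e ` T0. lt0 (d y) (d (e x))}" using de[of y] de[OF that] by simp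
  qed
  have B3: "bij_betw (\<lambda>x. ht0 (d x)) {y\<in>e ` T0. lt0 (d y) (d (e x))} {\<beta>. \<beta> < ht0 (d (e x))}"
    if "x \<in> T0" for x
  proof -
    have inj': "inj_on e {y\<in>T0. lt0 y x}" using inj by (rule inj_on_subset) blast
    have b1: "bij_betw e {y\<in>T0. lt0 y x} (e ` {y\<in>T0. lt0 y x})" using inj' by (rule inj_on_imp_bij_betw)
    have b2: "bij_betw (\<lambda>x. ht0 (d x)) (e ` {y\<in>T0. lt0 y x}) {\<beta>. \<beta> < ht0 x}"
    proof -
      have "bij_betw d (e ` {y\<in>T0. lt0 y x}) {y\<in>T0. lt0 y x}"
      proof -
        have "bij_betw (inv_into {y\<in>T0. lt0 y x} e) (e ` {y\<in>T0. lt0 y x}) {y\<in>T0. lt0 y x}"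
          using b1 by (rule bij_betw_inv_into)
        moreover have "\<And>z. z \<in> e ` {y\<in>T0. lt0 y x} \<Longrightarrow> inv_into {y\<in>T0. lt0 y x} e z = d z"
        proof -
          fix z assume "z \<in> e ` {y\<in>T0. lt0 y x}"
          then obtain y where y: "y \<in> {y\<in>T0. lt0 y x}" "z = e y" by blast
          show "inv_into {y\<in>T0. lt0 y x} e z = d z" using inv_into_f_f[OF inj' y(1)] de y by simp
        qed
        ultimately show ?thesis using bij_betw_cong[of "e ` {y\<in>T0. lt0 y x}" "inv_into {y\<in>T0. lt0 y x} e" d] by simp
      qed
      moreover have "bij_betw ht0 {y\<in>T0. lt0 y x} {\<beta>. \<beta> < ht0 x}" using T3 that by blast
      ultimately have "bij_betw (ht0 \<circ> d) (e ` {y\<in>T0. lt0 y x}) {\<beta>. \<beta> < ht0 x}"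
        by (rule bij_betw_trans)
      thus ?thesis by (simp add: comp_def)
    qed
    show ?thesis by (subst pred[OF that], subst de[OF that], rule b2)
  qed
  show "is_tree (e ` T0) (\<lambda>x y. lt0 (inv_into T0 e x) (inv_into T0 e y)) (\<lambda>x. ht0 (inv_into T0 e x))"
    unfolding is_tree_def d_def[symmetric]
  proof (intro conjI)
    show "\<forall>x\<in>e ` T0. \<not> lt0 (d x) (d x)"
    proof
      fix x assume "x \<in> e ` T0"
      from T1 dT[OF this] show "\<not> lt0 (d x) (d x)" by (rule bspec)
    qed
    show "\<forall>x\<in>e ` T0. \<forall>y\<in>e ` T0. \<forall>z\<in>e ` T0. lt0 (d x) (d y) \<and> lt0 (d y) (d z) \<longrightarrow> lt0 (d x) (d z)"
    proof (intro ballI impI)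
      fix x y z assume "x \<in> e ` T0" "y \<in> e ` T0" "z \<in> e ` T0" "lt0 (d x) (d y) \<and> lt0 (d y) (d z)"
      thus "lt0 (d x) (d z)" using T2[rule_format, OF dT dT dT] by blast
    qed
    show "\<forall>x\<in>e ` T0. bij_betw (\<lambda>x. ht0 (d x)) {y \<in> e ` T0. lt0 (d y) (d x)} {\<beta>. \<beta> < ht0 (d x)} \<and>
        (\<forall>y\<in>e ` T0. \<forall>z\<in>e ` T0. lt0 (d y) (d x) \<and> lt0 (d z) (d x) \<longrightarrow> lt0 (d y) (d z) = (ht0 (d y) < ht0 (d z)))"
    proof (intro ballI conjI)
      fix x assume "x \<in> e ` T0"
      then obtain x0 where x0: "x0 \<in> T0" "x = e x0" by blast
      show "bij_betw (\<lambda>x. ht0 (d x)) {y \<in> e ` T0. lt0 (d y) (d x)} {\<beta>. \<beta> < ht0 (d x)}"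
        using B3[OF x0(1)] x0(2) by simp
      fix y z assume "y \<in> e ` T0" "z \<in> e ` T0"
      then obtain y0 z0 where yz: "y0 \<in> T0" "y = e y0" "z0 \<in> T0" "z = e z0" by blast
      have "lt0 y0 x0 \<and> lt0 z0 x0 \<longrightarrow> (lt0 y0 z0 \<longleftrightarrow> ht0 y0 < ht0 z0)"
        using T4 x0(1) yz(1,3) by blast
      thus "lt0 (d y) (d x) \<and> lt0 (d z) (d x) \<longrightarrow> lt0 (d y) (d z) = (ht0 (d y) < ht0 (d z))"
        unfolding yz(2,4) x0(2) de[OF yz(1)] de[OF yz(3)] de[OF x0(1)] .
    qed
  qed
qed

lemma transfer_branch:
  fixes e :: "'a \<Rightarrow> 'b" and ht0 :: "'a \<Rightarrow> 'k::wellorder"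
  assumes inj: "inj_on e T0"
    and br: "cofinal_branch (e ` T0) (\<lambda>x y. lt0 (inv_into T0 e x) (inv_into T0 e y)) (\<lambda>x. ht0 (inv_into T0 e x)) B"
  shows "cofinal_branch T0 lt0 ht0 (inv_into T0 e ` B)"
proof -
  define d where "d = inv_into T0 e"
  have de: "y \<in> T0 \<Longrightarrow> d (e y) = y" for y unfolding d_def using inj by (rule inv_into_f_f)
  have dT: "x \<in> e ` T0 \<Longrightarrow> d x \<in> T0" for x using de by auto
  have B1: "B \<subseteq> e ` T0" and B2: "\<forall>x\<in>B. \<forall>y\<in>B. x = y \<or> lt0 (d x) (d y) \<or> lt0 (d y) (d x)"
    and B3: "\<forall>x\<in>B. \<forall>y\<in>e ` T0. lt0 (d y) (d x) \<longrightarrow> y \<in> B"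
    and B4: "\<forall>\<alpha>. B \<inter> tree_level (e ` T0) (\<lambda>x. ht0 (d x)) \<alpha> \<noteq> {}"
    using br unfolding cofinal_branch_def d_def by blast+
  show ?thesis unfolding cofinal_branch_def d_def[symmetric]
  proof (intro conjI)
    show "d ` B \<subseteq> T0" using B1 dT by blast
    show "\<forall>x\<in>d ` B. \<forall>y\<in>d ` B. x = y \<or> lt0 x y \<or> lt0 y x"
    proof (intro ballI)
      fix x y assume "x \<in> d ` B" "y \<in> d ` B"
      then obtain x' y' where xy: "x' \<in> B" "x = d x'" "y' \<in> B" "y = d y'" by blast
      have "x' = y' \<or> lt0 (d x') (d y') \<or> lt0 (d y') (d x')" using B2 xy(1,3) by blast
      thus "x = y \<or> lt0 x y \<or> lt0 y x" using xy by auto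
    qed
    show "\<forall>x\<in>d ` B. \<forall>y\<in>T0. lt0 y x \<longrightarrow> y \<in> d ` B"
    proof (intro ballI impI)
      fix x y assume "x \<in> d ` B" "y \<in> T0" "lt0 y x"
      then obtain x' where x': "x' \<in> B" "x = d x'" by blast
      have "lt0 (d (e y)) (d x')" using de[OF \<open>y \<in> T0\<close>] x' \<open>lt0 y x\<close> by simp
      hence "e y \<in> B" using B3 x'(1) \<open>y \<in> T0\<close> by blast
      thus "y \<in> d ` B" using de[OF \<open>y \<in> T0\<close>] by force
    qed
    show "\<forall>\<alpha>. d ` B \<inter> tree_level T0 ht0 \<alpha> \<noteq> {}"
    proof
      fix \<alpha>
      obtain x where "x \<in> B" "x \<in> e ` T0" "ht0 (d x) = \<alpha>" using B4[rule_format, of \<alpha>]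
        unfolding tree_level_def by blast
      hence "d x \<in> d ` B \<inter> tree_level T0 ht0 \<alpha>" using dT unfolding tree_level_def by blast
      thus "d ` B \<inter> tree_level T0 ht0 \<alpha> \<noteq> {}" by blast
    qed
  qed
qed

definition rs :: "('k::wellorder \<Rightarrow> nat) \<Rightarrow> 'k \<Rightarrow> ('k \<Rightarrow> nat)" where
  "rs s a = (\<lambda>\<xi>. if \<xi> < a then s \<xi> else 0)"

definition TN :: "('k::wellorder \<Rightarrow> 'k \<Rightarrow> nat) \<Rightarrow> ('k \<times> ('k \<Rightarrow> nat)) set" where
  "TN c = {(a, rs (\<lambda>\<xi>. c \<xi> bb) a) | a bb. a \<le> bb}"

definition ltN :: "('k::wellorder \<times> ('k \<Rightarrow> nat)) \<Rightarrow> ('k \<times> ('k \<Rightarrow> nat)) \<Rightarrow> bool" where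
  "ltN x y \<longleftrightarrow> fst x < fst y \<and> snd x = rs (snd y) (fst x)"

lemma rs_rs: "a \<le> b \<Longrightarrow> rs (rs s b) a = rs s a"
  by (auto simp: rs_def fun_eq_iff)

lemma TN_preds:
  assumes "x \<in> TN c"
  shows "{y\<in>TN c. ltN y x} = (\<lambda>a. (a, rs (snd x) a)) ` {a. a < fst x}"
proof (rule set_eqI, rule iffI)
  fix y assume "y \<in> {y\<in>TN c. ltN y x}"
  hence "fst y < fst x" "snd y = rs (snd x) (fst y)" unfolding ltN_def by auto
  thus "y \<in> (\<lambda>a. (a, rs (snd x) a)) ` {a. a < fst x}"
    by (intro image_eqI[of _ _ "fst y"]) (auto simp: prod_eq_iff)
next
  fix y assume "y \<in> (\<lambda>a. (a, rs (snd x) a)) ` {a. a < fst x}"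
  then obtain a where y: "y = (a, rs (snd x) a)" "a < fst x" by blast
  from assms obtain a0 bb where x: "x = (a0, rs (\<lambda>\<xi>. c \<xi> bb) a0)" "a0 \<le> bb" unfolding TN_def by blast
  have "rs (snd x) a = rs (\<lambda>\<xi>. c \<xi> bb) a" using x y(2) rs_rs[of a a0] by simp
  moreover have "a \<le> bb" using x y(2) by simp
  ultimately have "y \<in> TN c" unfolding TN_def using y(1) by auto
  moreover have "ltN y x" unfolding ltN_def using y by simp
  ultimately show "y \<in> {y\<in>TN c. ltN y x}" by simp
qed

lemma TN_tree: "is_tree (TN c) ltN fst"
  unfolding is_tree_def
proof (intro conjI ballI impI)
  fix x assume "x \<in> TN c"
  show "\<not> ltN x x" unfolding ltN_def by simp
next
  fix x y z assume "ltN x y \<and> ltN y z"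
  thus "ltN x z" unfolding ltN_def using rs_rs[of "fst x" "fst y" "snd z"] by auto
next
  fix x assume x: "x \<in> TN c"
  have "inj_on fst ((\<lambda>a. (a, rs (snd x) a)) ` {a. a < fst x})" by (auto simp: inj_on_def)
  moreover have "fst ` ((\<lambda>a. (a, rs (snd x) a)) ` {a. a < fst x}) = {a. a < fst x}"
    by (force simp: image_image)
  ultimately show "bij_betw fst {y\<in>TN c. ltN y x} {\<beta>. \<beta> < fst x}"
    unfolding TN_preds[OF x] bij_betw_def by simp
next
  fix x y z assume "x \<in> TN c" "y \<in> TN c" "z \<in> TN c" "ltN y x \<and> ltN z x"
  hence y: "fst y < fst x" "snd y = rs (snd x) (fst y)" and z: "fst z < fst x" "snd z = rs (snd x) (fst z)"
    unfolding ltN_def by auto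
  show "ltN y z \<longleftrightarrow> fst y < fst z"
  proof
    assume "fst y < fst z"
    hence "snd y = rs (snd z) (fst y)" using y z rs_rs[of "fst y" "fst z" "snd x"] by simp
    thus "ltN y z" using \<open>fst y < fst z\<close> unfolding ltN_def by simp
  qed (simp add: ltN_def)
qed

lemma TN_level: "tree_level (TN c) fst \<alpha> = {(\<alpha>, rs (\<lambda>\<xi>. c \<xi> bb) \<alpha>) | bb. \<alpha> \<le> bb}"
  unfolding tree_level_def TN_def by auto

lemma TN_kappa:
  assumes SI: "strongly_inaccessible TYPE('k::wellorder)"
    and cr: "\<forall>\<alpha> \<beta>. \<alpha> < \<beta> \<longrightarrow> c \<alpha> \<beta> < (2::nat)"
  shows "kappa_tree (TN (c::'k \<Rightarrow> 'k \<Rightarrow> nat)) ltN fst"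
  unfolding kappa_tree_def
proof (intro conjI allI)
  show "is_tree (TN c) ltN fst" by (rule TN_tree)
  fix \<alpha> :: 'k
  show "tree_level (TN c) fst \<alpha> \<noteq> {}" unfolding TN_level by blast
  define \<phi> where "\<phi> x = {\<xi>. \<xi> < \<alpha> \<and> snd x \<xi> = 1}" for x :: "'k \<times> ('k \<Rightarrow> nat)"
  have "inj_on \<phi> (tree_level (TN c) fst \<alpha>)"
  proof (rule inj_onI)
    fix x y assume "x \<in> tree_level (TN c) fst \<alpha>" "y \<in> tree_level (TN c) fst \<alpha>" and eq: "\<phi> x = \<phi> y"
    then obtain b1 b2 where x: "x = (\<alpha>, rs (\<lambda>\<xi>. c \<xi> b1) \<alpha>)" "\<alpha> \<le> b1"
      and y: "y = (\<alpha>, rs (\<lambda>\<xi>. c \<xi> b2) \<alpha>)" "\<alpha> \<le> b2" unfolding TN_level by blast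
    have "rs (\<lambda>\<xi>. c \<xi> b1) \<alpha> \<xi> = rs (\<lambda>\<xi>. c \<xi> b2) \<alpha> \<xi>" for \<xi>
    proof (cases "\<xi> < \<alpha>")
      case True
      have c1: "c \<xi> b1 < 2" "c \<xi> b2 < 2" using cr True x(2) y(2) by (meson less_le_trans)+
      have "(\<xi> \<in> \<phi> x) = (\<xi> \<in> \<phi> y)" using eq by simp
      hence "(c \<xi> b1 = 1) = (c \<xi> b2 = 1)" unfolding \<phi>_def using x y True by (simp add: rs_def)
      hence "c \<xi> b1 = c \<xi> b2" using c1 by linarith
      thus ?thesis using True by (simp add: rs_def)
    qed (simp add: rs_def)
    thus "x = y" using x y by (simp add: fun_eq_iff)
  qed
  moreover have "\<phi> ` tree_level (TN c) fst \<alpha> \<subseteq> Pow {\<xi>. \<xi> < \<alpha>}" unfolding \<phi>_def by auto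
  ultimately have "tree_level (TN c) fst \<alpha> \<lesssim> Pow {\<xi>. \<xi> < \<alpha>}" unfolding lepoll_def by blast
  thus "tree_level (TN c) fst \<alpha> \<prec> (UNIV::'k set)"
    using SI_pow[OF SI SI_init[OF SI]] by (rule lesspoll_trans1)
qed

lemma TN_small:
  assumes SI: "strongly_inaccessible TYPE('k::wellorder)"
  shows "TN (c::'k \<Rightarrow> 'k \<Rightarrow> nat) \<lesssim> (UNIV::'k set)"
proof -
  have "TN c \<subseteq> (\<lambda>p. (fst p, rs (\<lambda>\<xi>. c \<xi> (snd p)) (fst p))) ` (UNIV \<times> UNIV)"
  proof
    fix x assume "x \<in> TN c"
    then obtain a bb where "x = (a, rs (\<lambda>\<xi>. c \<xi> bb) a)" unfolding TN_def by blast
    thus "x \<in> (\<lambda>p. (fst p, rs (\<lambda>\<xi>. c \<xi> (snd p)) (fst p))) ` (UNIV \<times> UNIV)"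
      by (intro image_eqI[of _ _ "(a, bb)"]) auto
  qed
  hence "TN c \<lesssim> (UNIV::'k set) \<times> (UNIV::'k set)" by (rule subset_image_lepoll)
  also have "\<dots> \<approx> (UNIV::'k set)" by (rule times_inf[OF SI_infinite[OF SI]])
  finally show ?thesis .
qed

lemma path_to_core:
  fixes c :: "'k::wellorder \<Rightarrow> 'k \<Rightarrow> nat" and F :: "'m filter" and P :: "'k \<Rightarrow> 'm \<Rightarrow> 'k \<times> ('k \<Rightarrow> nat)"
  assumes SI: "strongly_inaccessible TYPE('k)"
    and P: "\<And>\<alpha> i. P \<alpha> i \<in> tree_level (TN c) fst \<alpha>"
    and ev: "\<And>\<alpha> \<alpha>'. \<alpha> < \<alpha>' \<Longrightarrow> eventually (\<lambda>i. ltN (P \<alpha> i) (P \<alpha>' i)) F"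
  shows "\<exists>\<beta> v. (\<forall>d i. d \<le> \<beta> d i) \<and> (\<forall>a d. a < d \<longrightarrow> eventually (\<lambda>i. c a (\<beta> d i) = v a i) F)"
proof -
  have ex: "\<exists>bb. \<alpha> \<le> bb \<and> P \<alpha> i = (\<alpha>, rs (\<lambda>\<xi>. c \<xi> bb) \<alpha>)" for \<alpha> i
    using P[of \<alpha> i] unfolding TN_level by blast
  define \<beta> where "\<beta> \<alpha> i = (SOME bb. \<alpha> \<le> bb \<and> P \<alpha> i = (\<alpha>, rs (\<lambda>\<xi>. c \<xi> bb) \<alpha>))" for \<alpha> i
  have \<beta>: "\<alpha> \<le> \<beta> \<alpha> i \<and> P \<alpha> i = (\<alpha>, rs (\<lambda>\<xi>. c \<xi> (\<beta> \<alpha> i)) \<alpha>)" for \<alpha> i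
    unfolding \<beta>_def by (rule someI_ex[OF ex])
  define nx where "nx a = (LEAST d. a < d)" for a :: 'k
  have nx1: "a < nx a" for a unfolding nx_def using SI_nomax[OF SI, of a] by (metis LeastI_ex)
  have nx2: "a < d \<Longrightarrow> nx a \<le> d" for a d unfolding nx_def by (rule Least_le)
  define v where "v a i = c a (\<beta> (nx a) i)" for a i
  have coh: "eventually (\<lambda>i. c a (\<beta> d i) = v a i) F" if ad: "a < d" for a d
  proof (cases "nx a = d")
    case True thus ?thesis unfolding v_def by simp
  next
    case False
    hence lt: "nx a < d" using nx2[OF ad] by simp
    show ?thesis using ev[OF lt]
    proof (rule eventually_mono)
      fix i assume "ltN (P (nx a) i) (P d i)"
      hence "snd (P (nx a) i) = rs (snd (P d i)) (fst (P (nx a) i))" unfolding ltN_def by simp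
      hence "snd (P (nx a) i) = rs (snd (P d i)) (nx a)" using \<beta>[of "nx a" i] by simp
      hence "rs (\<lambda>\<xi>. c \<xi> (\<beta> (nx a) i)) (nx a) = rs (rs (\<lambda>\<xi>. c \<xi> (\<beta> d i)) d) (nx a)"
        using \<beta>[of "nx a" i] \<beta>[of d i] by simp
      hence "rs (\<lambda>\<xi>. c \<xi> (\<beta> (nx a) i)) (nx a) a = rs (rs (\<lambda>\<xi>. c \<xi> (\<beta> d i)) d) (nx a) a" by simp
      thus "c a (\<beta> d i) = v a i" unfolding v_def rs_def using nx1[of a] ad by simp
    qed
  qed
  show ?thesis using \<beta> coh by blast
qed

theorem theorem4p17:
  fixes F :: "'m filter"
  assumes "infinite (UNIV::'m set)"
    and "uniform_filter F"
    and "strongly_inaccessible TYPE('k::wellorder)"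
    and "\<forall>(T::'k set) (lt::'k \<Rightarrow> 'k \<Rightarrow> bool) (ht::'k \<Rightarrow> 'k).
           aronszajn_tree T lt ht \<longrightarrow> (\<exists>f. ascent_path F T lt ht f)"
  shows "\<not> Pr1_succ TYPE('k) 2 (UNIV::'m set)"
proof
  note minf = assms(1) and SI = assms(3) and hyp = assms(4)
  assume "Pr1_succ TYPE('k) 2 (UNIV::'m set)"
  then obtain c :: "'k \<Rightarrow> 'k \<Rightarrow> nat" where cr: "\<forall>\<alpha> \<beta>. \<alpha> < \<beta> \<longrightarrow> c \<alpha> \<beta> < 2"
    and cp: "\<forall>(A::'k set) (B::'k set set) \<tau>.
          A \<approx> (UNIV::'k set) \<and> B \<approx> (UNIV::'k set) \<and> pairwise disjnt B \<and>
          (\<exists>S\<subseteq>(UNIV::'m set). \<forall>b\<in>B. b \<approx> S) \<and> \<tau> < 2 \<longrightarrow>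
          (\<exists>\<alpha>\<in>A. \<exists>b\<in>B. \<forall>\<beta>\<in>b. \<alpha> < \<beta> \<and> c \<alpha> \<beta> = \<tau>)"
    unfolding Pr1_succ_def by blast
  have Fnb: "F \<noteq> bot"
  proof
    assume "F = bot"
    hence "eventually (\<lambda>i. i \<in> ({}::'m set)) F" by simp
    hence "({}::'m set) \<approx> (UNIV::'m set)" using assms(2) unfolding uniform_filter_def by blast
    hence "(UNIV::'m set) \<approx> ({}::'m set)" by (rule eqpoll_sym)
    thus False by simp
  qed
  have kt: "kappa_tree (TN c) ltN fst" by (rule TN_kappa[OF SI cr])
  obtain P :: "'k \<Rightarrow> 'm \<Rightarrow> 'k \<times> ('k \<Rightarrow> nat)"
    where P1: "\<And>\<alpha> i. P \<alpha> i \<in> tree_level (TN c) fst \<alpha>"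
      and P2: "\<And>\<alpha> \<alpha>'. \<alpha> < \<alpha>' \<Longrightarrow> eventually (\<lambda>i. ltN (P \<alpha> i) (P \<alpha>' i)) F"
  proof (cases "\<exists>B. cofinal_branch (TN c) ltN fst B")
    case True
    then obtain B where B: "cofinal_branch (TN c) ltN fst B" by blast
    have Bs: "B \<subseteq> TN c" and Blin: "\<forall>x\<in>B. \<forall>y\<in>B. x = y \<or> ltN x y \<or> ltN y x"
      and Bl: "\<forall>\<alpha>. B \<inter> tree_level (TN c) fst \<alpha> \<noteq> {}"
    proof -
      have BB: "B \<subseteq> TN c \<and> (\<forall>x\<in>B. \<forall>y\<in>B. x = y \<or> ltN x y \<or> ltN y x) \<and>
        (\<forall>x\<in>B. \<forall>y\<in>TN c. ltN y x \<longrightarrow> y \<in> B) \<and> (\<forall>\<alpha>. B \<inter> tree_level (TN c) fst \<alpha> \<noteq> {})"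
        using B unfolding cofinal_branch_def .
      show "B \<subseteq> TN c" using BB by (rule conjunct1)
      show "\<forall>x\<in>B. \<forall>y\<in>B. x = y \<or> ltN x y \<or> ltN y x" using BB[THEN conjunct2] by (rule conjunct1)
      show "\<forall>\<alpha>. B \<inter> tree_level (TN c) fst \<alpha> \<noteq> {}" using BB[THEN conjunct2, THEN conjunct2] by (rule conjunct2)
    qed
    define Q where "Q \<alpha> (i::'m) = (SOME x. x \<in> B \<inter> tree_level (TN c) fst \<alpha>)" for \<alpha> i
    have Q: "Q \<alpha> i \<in> B \<inter> tree_level (TN c) fst \<alpha>" for \<alpha> i
    proof -
      have "\<exists>x. x \<in> B \<inter> tree_level (TN c) fst \<alpha>" using Bl by blast
      from someI_ex[OF this] show ?thesis unfolding Q_def .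
    qed
    show ?thesis
    proof (rule that[of Q])
      show "Q \<alpha> i \<in> tree_level (TN c) fst \<alpha>" for \<alpha> i using Q[of \<alpha> i] by simp
      fix \<alpha> \<alpha>' :: 'k assume lt: "\<alpha> < \<alpha>'"
      have "ltN (Q \<alpha> i) (Q \<alpha>' i)" for i
      proof -
        have q1: "Q \<alpha> i \<in> B" "Q \<alpha> i \<in> tree_level (TN c) fst \<alpha>" using Q[of \<alpha> i] by simp_all
        have q2: "Q \<alpha>' i \<in> B" "Q \<alpha>' i \<in> tree_level (TN c) fst \<alpha>'" using Q[of \<alpha>' i] by simp_all
        have f: "fst (Q \<alpha> i) = \<alpha>" "fst (Q \<alpha>' i) = \<alpha>'" using q1(2) q2(2) unfolding tree_level_def by simp_all
        have "Q \<alpha> i = Q \<alpha>' i \<or> ltN (Q \<alpha> i) (Q \<alpha>' i) \<or> ltN (Q \<alpha>' i) (Q \<alpha> i)"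
          using bspec[OF bspec[OF Blin q1(1)] q2(1)] .
        moreover have "Q \<alpha> i \<noteq> Q \<alpha>' i" using f lt by (metis less_irrefl)
        moreover have "\<not> ltN (Q \<alpha>' i) (Q \<alpha> i)" unfolding ltN_def using f lt by (simp add: not_less_iff_gr_or_eq)
        ultimately show ?thesis by blast
      qed
      thus "eventually (\<lambda>i. ltN (Q \<alpha> i) (Q \<alpha>' i)) F" by (simp add: always_eventually)
    qed
  next
    case False
    obtain e :: "'k \<times> ('k \<Rightarrow> nat) \<Rightarrow> 'k" where inj: "inj_on e (TN c)"
      using TN_small[OF SI, of c] unfolding lepoll_def by blast
    define d where "d = inv_into (TN c) e"
    define T where "T = e ` TN c"
    define lt where "lt = (\<lambda>x y. ltN (d x) (d y))"
    define ht where "ht = (\<lambda>x. fst (d x))"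
    have tr: "is_tree T lt ht" unfolding T_def lt_def ht_def d_def
      by (rule transfer_tree(1)[OF inj TN_tree])
    have lev: "tree_level T ht \<alpha> = e ` tree_level (TN c) fst \<alpha>" for \<alpha>
      unfolding T_def ht_def d_def by (rule transfer_tree(2)[OF inj TN_tree])
    have "aronszajn_tree T lt ht"
      unfolding aronszajn_tree_def kappa_tree_def
    proof (intro conjI allI)
      show "is_tree T lt ht" by (rule tr)
      fix \<alpha>
      have L: "tree_level (TN c) fst \<alpha> \<noteq> {}" "tree_level (TN c) fst \<alpha> \<prec> (UNIV::'k set)"
        using kt unfolding kappa_tree_def by blast+
      show "tree_level T ht \<alpha> \<noteq> {}" unfolding lev using L(1) by blast
      have "inj_on e (tree_level (TN c) fst \<alpha>)" using inj
        by (rule inj_on_subset) (auto simp: tree_level_def)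
      hence "e ` tree_level (TN c) fst \<alpha> \<approx> tree_level (TN c) fst \<alpha>" by (rule inj_on_image_eqpoll_self)
      thus "tree_level T ht \<alpha> \<prec> (UNIV::'k set)" unfolding lev using L(2) by (rule eq_lesspoll_trans)
    next
      show "\<not> (\<exists>B. cofinal_branch T lt ht B)"
      proof
        assume "\<exists>B. cofinal_branch T lt ht B"
        then obtain B where "cofinal_branch T lt ht B" by blast
        hence "cofinal_branch (TN c) ltN fst (inv_into (TN c) e ` B)"
          unfolding T_def lt_def ht_def d_def by (rule transfer_branch[OF inj])
        thus False using False by blast
      qed
    qed
    then obtain f where f: "ascent_path F T lt ht f" using hyp by blast
    have f1: "f \<alpha> i \<in> tree_level T ht \<alpha>" and f2: "\<alpha> < \<alpha>' \<Longrightarrow> eventually (\<lambda>i. lt (f \<alpha> i) (f \<alpha>' i)) F"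
      for \<alpha> \<alpha>' i using f unfolding ascent_path_def by blast+
    show ?thesis
    proof (rule that[of "\<lambda>\<alpha> i. d (f \<alpha> i)"])
      fix \<alpha> i
      obtain y where y: "y \<in> tree_level (TN c) fst \<alpha>" "f \<alpha> i = e y" using f1[of \<alpha> i] unfolding lev by blast
      have "y \<in> TN c" using y(1) unfolding tree_level_def by blast
      hence "d (f \<alpha> i) = y" unfolding d_def y(2) using inj by (rule inv_into_f_f[rotated])
      thus "d (f \<alpha> i) \<in> tree_level (TN c) fst \<alpha>" using y(1) by simp
    next
      fix \<alpha> \<alpha>' :: 'k assume "\<alpha> < \<alpha>'"
      from f2[OF this] show "eventually (\<lambda>i. ltN (d (f \<alpha> i)) (d (f \<alpha>' i))) F" unfolding lt_def .
    qed
  qed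
  obtain \<beta> v where bge: "\<forall>d i. d \<le> \<beta> d i" and coh: "\<forall>a d. a < d \<longrightarrow> eventually (\<lambda>i. c a (\<beta> d i) = v a i) F"
    using path_to_core[OF SI P1 P2] by blast
  have b': "\<And>d i. d \<le> \<beta> d i" using bge by blast
  have coh': "\<And>a d. a < d \<Longrightarrow> eventually (\<lambda>i. c a (\<beta> d i) = v a i) F" using coh by blast
  have "\<exists>A B \<tau>. A \<approx> (UNIV::'k set) \<and> B \<approx> (UNIV::'k set) \<and> pairwise disjnt B \<and>
     (\<exists>S\<subseteq>(UNIV::'m set). \<forall>b\<in>B. b \<approx> S) \<and> \<tau> < (2::nat) \<and>
     \<not>(\<exists>\<alpha>\<in>A. \<exists>b\<in>B. \<forall>x\<in>b. \<alpha> < x \<and> c \<alpha> x = \<tau>)"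
  proof (rule coreL[where \<beta>=\<beta> and v=v])
    show "strongly_inaccessible TYPE('k)" by (rule SI)
    show "infinite (UNIV::'m set)" by (rule minf)
    show "F \<noteq> bot" by (rule Fnb)
    show "d \<le> \<beta> d i" for d i by (rule b')
    show "a < d \<Longrightarrow> eventually (\<lambda>i. c a (\<beta> d i) = v a i) F" for a d by (rule coh')
  qed
  then obtain A B \<tau> where H: "A \<approx> (UNIV::'k set) \<and> B \<approx> (UNIV::'k set) \<and> pairwise disjnt B \<and>
     (\<exists>S\<subseteq>(UNIV::'m set). \<forall>b\<in>B. b \<approx> S) \<and> \<tau> < (2::nat) \<and>
     \<not>(\<exists>\<alpha>\<in>A. \<exists>b\<in>B. \<forall>x\<in>b. \<alpha> < x \<and> c \<alpha> x = \<tau>)"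
    by (elim exE) (erule that)
  note ABt = H[THEN conjunct1] H[THEN conjunct2, THEN conjunct1] H[THEN conjunct2, THEN conjunct2, THEN conjunct1]
    H[THEN conjunct2, THEN conjunct2, THEN conjunct2, THEN conjunct1]
    H[THEN conjunct2, THEN conjunct2, THEN conjunct2, THEN conjunct2, THEN conjunct1]
  note no = H[THEN conjunct2, THEN conjunct2, THEN conjunct2, THEN conjunct2, THEN conjunct2]
  have "A \<approx> (UNIV::'k set) \<and> B \<approx> (UNIV::'k set) \<and> pairwise disjnt B \<and>
     (\<exists>S\<subseteq>(UNIV::'m set). \<forall>b\<in>B. b \<approx> S) \<and> \<tau> < 2" by (intro conjI ABt)
  with cp[THEN spec[of _ A], THEN spec[of _ B], THEN spec[of _ \<tau>]]
  have "\<exists>\<alpha>\<in>A. \<exists>b\<in>B. \<forall>x\<in>b. \<alpha> < x \<and> c \<alpha> x = \<tau>" by (rule mp)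
  thus False using no by contradiction
qed

end
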